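(* Let $n\ge 1$ and $l$ be integers, and fix a linear ordering of $\{E,D,N\}$. Let $BDel(n,n,l)$ be the set of paths in $Del(n,n,l)$ that go strictly above the line $y=x$ at some point. Then $$\sum_{W\in BDel(n,n,l)} q^{\mathrm{maj}(W)} = q\sum_{W\in Del(n+1,n-1,l)} q^{\mathrm{maj}(W)}\quad\text{if } E<N,$$ and $$\sum_{W\in BDel(n,n,l)} q^{\mathrm{maj}(W)} = \sum_{W\in Del(n+1,n-1,l)} q^{\mathrm{maj}(W)}\quad\text{if } E>N.$$ Equivalently, there is a bijection $\varphi:BDel(n,n,l)\to Del(n+1,n-1,l)$ with $\mathrm{maj}(W)=\mathrm{maj}(\varphi(W))+1$ for all $W$ if $E<N$, and $\mathrm{maj}(W)=\mathrm{maj}(\varphi(W))$ for all $W$ if $E>N$.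
   Context: A Delannoy path from $(0,0)$ to $(m,n)$ is a lattice path using only the steps $E=(1,0)$, $D=(1,1)$, $N=(0,1)$; a path with $l$ steps is identified with the word $W=w_1w_2\cdots w_l$ over the alphabet $\{E,D,N\}$. $Del(m,n,l)$ denotes the set of Delannoy paths from $(0,0)$ to $(m,n)$ with exactly $l$ steps. Given a linear ordering of $\{E,D,N\}$, an index $i$ with $1\le i\le l-1$ is a descent of $W$ if $w_i>w_{i+1}$, and $\mathrm{maj}(W)=\sum_{i \text{ descent}} i$. *)

theory Defs
  imports Main
begin

datatype step = E | D | N

definition xcoord :: "step list \<Rightarrow> nat" where
  "xcoord W = length (filter (\<lambda>s. s = E \<or> s = D) W)"

definition ycoord :: "step list \<Rightarrow> nat" where
  "ycoord W = length (filter (\<lambda>s. s = N \<or> s = D) W)"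

definition Del :: "nat \<Rightarrow> nat \<Rightarrow> nat \<Rightarrow> step list set" where
  "Del m n l = {W. length W = l \<and> xcoord W = m \<and> ycoord W = n}"

(* paths that go strictly above the line y = x at some point;
   it suffices to check lattice points, i.e. prefixes *)
definition BDel :: "nat \<Rightarrow> nat \<Rightarrow> step list set" where
  "BDel n l = {W \<in> Del n n l. \<exists>k \<le> length W. xcoord (take k W) < ycoord (take k W)}"

(* the linear order on {E,D,N} is given by an injective rank function;
   i (1-based, 1 \<le> i \<le> l-1) is a descent iff w_i > w_(i+1) *)
definition maj :: "(step \<Rightarrow> nat) \<Rightarrow> step list \<Rightarrow> nat" where
  "maj r W = (\<Sum>i \<in> {i. 1 \<le> i \<and> i < length W \<and> r (W ! (i - 1)) > r (W ! i)}. i)"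

end

theory Submission
  imports Defs
begin


definition mj :: "(step \<Rightarrow> nat) \<Rightarrow> step list \<Rightarrow> nat" where
  "mj r W = (\<Sum>i<length W - 1. if r (W!(Suc i)) < r (W!i) then Suc i else 0)"
definition dsc :: "(step \<Rightarrow> nat) \<Rightarrow> step list \<Rightarrow> nat" where
  "dsc r W = (\<Sum>i<length W - 1. if r (W!(Suc i)) < r (W!i) then 1 else 0)"

lemma maj_mj: "maj r W = mj r W"
proof -
  have "{i. 1 \<le> i \<and> i < length W \<and> r (W ! (i - 1)) > r (W ! i)}
        = Suc ` {i \<in> {..<length W - 1}. r (W!(Suc i)) < r (W!i)}"
  proof (intro set_eqI iffI)
    fix x assume "x \<in> {i. 1 \<le> i \<and> i < length W \<and> r (W ! (i - 1)) > r (W ! i)}"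
    then have "1 \<le> x" "x < length W" "r (W!(x-1)) > r (W!x)" by auto
    then show "x \<in> Suc ` {i \<in> {..<length W - 1}. r (W!(Suc i)) < r (W!i)}"
      by (intro image_eqI[where x="x-1"]) auto
  next
    fix x assume "x \<in> Suc ` {i \<in> {..<length W - 1}. r (W!(Suc i)) < r (W!i)}"
    then show "x \<in> {i. 1 \<le> i \<and> i < length W \<and> r (W ! (i - 1)) > r (W ! i)}" by auto
  qed
  then have "maj r W = (\<Sum>i\<in>{i \<in> {..<length W - 1}. r (W!(Suc i)) < r (W!i)}. Suc i)"
    unfolding maj_def by (simp add: sum.reindex)
  also have "\<dots> = mj r W" unfolding mj_def by (rule sum.inter_filter) simp
  finally show ?thesis .
qed

lemma mj_Cons: "mj r (x # W) = mj r W + dsc r W + (if W \<noteq> [] \<and> r (hd W) < r x then 1 else 0)"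
proof (cases W)
  case Nil then show ?thesis by (simp add: mj_def dsc_def)
next
  case (Cons y W')
    have "\<And>c i. (if c then Suc (Suc i) else 0) = (if c then Suc i else 0) + (if c then (1::nat) else 0)" by simp
    then show ?thesis unfolding mj_def dsc_def Cons
      by (simp add: sum.lessThan_Suc_shift sum.distrib del: sum.lessThan_Suc)
qed

lemma mj_Nil[simp]: "mj r [] = 0" by (simp add: mj_def)
lemma dsc_Nil[simp]: "dsc r [] = 0" by (simp add: dsc_def)

lemma dsc_Cons: "dsc r (x # W) = dsc r W + (if W \<noteq> [] \<and> r (hd W) < r x then 1 else 0)"
proof (cases W)
  case Nil then show ?thesis by (simp add: dsc_def)
next
  case (Cons y W')
  show ?thesis unfolding dsc_def Cons
    by (simp add: sum.lessThan_Suc_shift del: sum.lessThan_Suc)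
qed

lemma dsc_append: "dsc r (A @ B) = dsc r A + dsc r B + (if A \<noteq> [] \<and> B \<noteq> [] \<and> r (hd B) < r (last A) then 1 else 0)"
proof (induction A)
  case (Cons a A) then show ?case by (cases "A = []") (simp_all add: dsc_Cons)
qed simp

lemma mj_append: "mj r (A @ B) = mj r A + mj r B + length A * dsc r B + (if A \<noteq> [] \<and> B \<noteq> [] \<and> r (hd B) < r (last A) then length A else 0)"
proof (induction A)
  case (Cons a A) then show ?case by (cases "A = []") (simp_all add: mj_Cons dsc_Cons dsc_append algebra_simps)
qed simp



fun hs :: "step \<Rightarrow> int" where "hs E = -1" | "hs D = 0" | "hs N = 1"
definition ht :: "step list \<Rightarrow> int" where "ht W = sum_list (map hs W)"
definition PP :: "step list \<Rightarrow> bool" where "PP U \<longleftrightarrow> (\<forall>k. ht (take k U) \<le> ht U)"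
definition QQ :: "step list \<Rightarrow> bool" where "QQ V \<longleftrightarrow> (\<forall>k. ht (take k V) \<le> 0)"
definition SS :: "nat \<Rightarrow> nat \<Rightarrow> (step list \<times> step list) set" where
  "SS n l = {(U,V). PP U \<and> QQ V \<and> length U + length V + 1 = l \<and>
                    xcoord U + xcoord V = n \<and> ycoord U + ycoord V + 1 = n}"

lemma ht_Nil[simp]: "ht [] = 0" by (simp add: ht_def)
lemma ht_Cons[simp]: "ht (x # A) = hs x + ht A" by (simp add: ht_def)
lemma ht_append[simp]: "ht (A @ B) = ht A + ht B" by (simp add: ht_def)
lemma xcoord_append[simp]: "xcoord (A @ B) = xcoord A + xcoord B" by (simp add: xcoord_def)
lemma ycoord_append[simp]: "ycoord (A @ B) = ycoord A + ycoord B" by (simp add: ycoord_def)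
lemma xcoord_simps[simp]: "xcoord [] = 0" "xcoord (E # A) = Suc (xcoord A)"
  "xcoord (D # A) = Suc (xcoord A)" "xcoord (N # A) = xcoord A" by (simp_all add: xcoord_def)
lemma ycoord_simps[simp]: "ycoord [] = 0" "ycoord (E # A) = ycoord A"
  "ycoord (D # A) = Suc (ycoord A)" "ycoord (N # A) = Suc (ycoord A)" by (simp_all add: ycoord_def)

lemma ht_coord: "ht W = int (ycoord W) - int (xcoord W)"
proof (induction W)
  case (Cons a W) then show ?case by (cases a) auto
qed simp

lemma ht_take_Suc: "k < length W \<Longrightarrow> ht (take (Suc k) W) = ht (take k W) + hs (W ! k)"
  by (simp add: take_Suc_conv_app_nth)

lemma PP_ge0: "PP U \<Longrightarrow> ht U \<ge> 0"
  unfolding PP_def by (metis ht_Nil take0)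

lemma allD_ht: "\<forall>s\<in>set T. s = D \<Longrightarrow> ht T = 0"
  by (induction T) auto

lemma PP_appD: assumes "\<forall>s\<in>set T. s = D" shows "PP (U @ T) \<longleftrightarrow> PP U"
proof -
  have T0: "ht (take j T) = 0" for j using assms by (intro allD_ht) (auto dest: in_set_takeD)
  have "ht (take k (U @ T)) = ht (take k U)" for k using T0 by simp
  moreover have "ht (U @ T) = ht U" using allD_ht[OF assms] by simp
  ultimately show ?thesis unfolding PP_def by simp
qed

lemma QQ_Dapp: assumes "\<forall>s\<in>set T. s = D" shows "QQ (T @ R) \<longleftrightarrow> QQ R"
proof -
  have T0: "ht (take j T) = 0" for j using assms by (intro allD_ht) (auto dest: in_set_takeD)
  have 1: "ht (take k (T @ R)) = ht (take (k - length T) R)" for k using T0 allD_ht[OF assms] by simp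
  show ?thesis
  proof
    assume "QQ (T @ R)"
    then have "ht (take (j + length T) (T @ R)) \<le> 0" for j unfolding QQ_def by blast
    then show "QQ R" unfolding QQ_def using 1 by (metis add_diff_cancel_right')
  next
    assume "QQ R" then show "QQ (T @ R)" unfolding QQ_def using 1 by simp
  qed
qed



lemma SS_N: "(U,V) \<in> SS n l \<Longrightarrow> U @ N # V \<in> BDel n l"
proof -
  assume a: "(U,V) \<in> SS n l"
  then have P: "PP U" and c: "length U + length V + 1 = l" "xcoord U + xcoord V = n"
     "ycoord U + ycoord V + 1 = n" by (auto simp: SS_def)
  have "ht (take (Suc (length U)) (U @ N # V)) > 0" using PP_ge0[OF P] by simp
  then have "xcoord (take (Suc (length U)) (U @ N # V)) < ycoord (take (Suc (length U)) (U @ N # V))"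
    by (simp add: ht_coord)
  moreover have "Suc (length U) \<le> length (U @ N # V)" by simp
  ultimately show ?thesis using c unfolding BDel_def Del_def by (auto intro!: exI[where x="Suc (length U)"])
qed

lemma BDel_SS: "W \<in> BDel n l \<Longrightarrow> \<exists>U V. (U,V) \<in> SS n l \<and> W = U @ N # V"
proof -
  assume W: "W \<in> BDel n l"
  then obtain k0 where k0: "k0 \<le> length W" "xcoord (take k0 W) < ycoord (take k0 W)"
    unfolding BDel_def by auto
  have cW: "length W = l" "xcoord W = n" "ycoord W = n" using W unfolding BDel_def Del_def by auto
  define H where "H = (\<lambda>k. ht (take k W)) ` {..length W}"
  define M where "M = Max H"
  have fH: "finite H" "H \<noteq> {}" unfolding H_def by auto
  have hle: "ht (take j W) \<le> M" for j
  proof (cases "j \<le> length W")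
    case True then show ?thesis unfolding M_def H_def by (intro Max_ge) auto
  next
    case False then have "take j W = take (length W) W" by simp
    then show ?thesis unfolding M_def H_def by (metis Max_ge atMost_iff fH(1) H_def image_eqI order_refl)
  qed
  have Mpos: "M > 0" using hle[of k0] k0(2) by (simp add: ht_coord)
  have "M \<in> H" using Max_in[OF fH] unfolding M_def by simp
  then have ex: "\<exists>k. k \<le> length W \<and> ht (take k W) = M" unfolding H_def by auto
  define k where "k = (LEAST k. k \<le> length W \<and> ht (take k W) = M)"
  have k: "k \<le> length W" "ht (take k W) = M" using LeastI_ex[OF ex] unfolding k_def by auto
  have kmin: "ht (take j W) \<noteq> M" if "j < k" for j
  proof
    assume "ht (take j W) = M"
    moreover have "j \<le> length W" using that k by simp
    ultimately have "k \<le> j" unfolding k_def by (intro Least_le) simp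
    then show False using that by simp
  qed
  have "k \<noteq> 0" proof assume "k = 0" then show False using k Mpos by simp qed
  then obtain i where ki: "k = Suc i" by (cases k) auto
  have il: "i < length W" using k ki by simp
  have "ht (take i W) < M" using kmin[of i] hle[of i] ki by fastforce
  moreover have "ht (take k W) = ht (take i W) + hs (W ! i)" using ht_take_Suc[OF il] ki by simp
  ultimately have "hs (W ! i) > 0" using k by simp
  then have WiN: "W ! i = N" by (cases "W ! i") auto
  define U where "U = take i W"
  define V where "V = drop k W"
  have Wd: "W = U @ N # V" unfolding U_def V_def ki using id_take_nth_drop[OF il] WiN by simp
  have htU: "ht U = M - 1" using k ki WiN il unfolding U_def by (simp add: take_Suc_conv_app_nth)
  have PU: "PP U" unfolding PP_def
  proof
    fix j
    have "take j U = take (min j i) W" unfolding U_def by (simp add: min.commute)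
    moreover have "min j i < k" using ki by simp
    ultimately have "ht (take j U) < M" using kmin hle by (metis order_le_less)
    then show "ht (take j U) \<le> ht U" using htU by simp
  qed
  have QV: "QQ V" unfolding QQ_def
  proof
    fix j
    have "take (k + j) W = take k W @ take j V" unfolding V_def by (simp add: take_add)
    then have "ht (take (k + j) W) = M + ht (take j V)" using k by simp
    then show "ht (take j V) \<le> 0" using hle[of "k + j"] by simp
  qed
  have "(U, V) \<in> SS n l" using PU QV cW Wd unfolding SS_def by auto
  then show ?thesis using Wd by blast
qed

lemma BDel_image: "BDel n l = (\<lambda>(U,V). U @ N # V) ` SS n l"
  using BDel_SS SS_N by fastforce

lemma SS_E: "n \<ge> 1 \<Longrightarrow> (U,V) \<in> SS n l \<Longrightarrow> U @ E # V \<in> Del (Suc n) (n - 1) l"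
  unfolding SS_def Del_def by auto

lemma Del_SS: assumes n1: "n \<ge> 1" and W: "W \<in> Del (Suc n) (n - 1) l"
  shows "\<exists>U V. (U,V) \<in> SS n l \<and> W = U @ E # V"
proof -
  have cW: "length W = l" "xcoord W = Suc n" "ycoord W = n - 1" using W unfolding Del_def by auto
  have htW: "ht W < 0" using cW n1 by (simp add: ht_coord)
  define H where "H = (\<lambda>k. ht (take k W)) ` {..length W}"
  define M where "M = Max H"
  have fH: "finite H" "H \<noteq> {}" unfolding H_def by auto
  have hle: "ht (take j W) \<le> M" for j
  proof (cases "j \<le> length W")
    case True then show ?thesis unfolding M_def H_def by (intro Max_ge) auto
  next
    case False then have "take j W = take (length W) W" by simp
    then show ?thesis unfolding M_def H_def by (metis Max_ge atMost_iff fH(1) H_def image_eqI order_refl)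
  qed
  have M0: "M \<ge> 0" using hle[of 0] by simp
  define K where "K = {k. k \<le> length W \<and> ht (take k W) = M}"
  have fK: "finite K" unfolding K_def by auto
  have "M \<in> H" using Max_in[OF fH] unfolding M_def by simp
  then have Kne: "K \<noteq> {}" unfolding H_def K_def by auto
  define k where "k = Max K"
  have k: "k \<le> length W" "ht (take k W) = M" using Max_in[OF fK Kne] unfolding k_def K_def by auto
  have kmax: "ht (take j W) < M" if "k < j" "j \<le> length W" for j
  proof -
    have "j \<notin> K" using that Max_ge[OF fK, of j] unfolding k_def by auto
    then show ?thesis using hle[of j] that unfolding K_def by auto
  qed
  have kl: "k < length W" using k htW M0 by (metis le_neq_implies_less not_less take_all_iff)
  have "ht (take (Suc k) W) < M" using kmax[of "Suc k"] kl by simp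
  moreover have "ht (take (Suc k) W) = ht (take k W) + hs (W ! k)" using ht_take_Suc[OF kl] by simp
  ultimately have "hs (W ! k) < 0" using k by simp
  then have WkE: "W ! k = E" by (cases "W ! k") auto
  define U where "U = take k W"
  define V where "V = drop (Suc k) W"
  have Wd: "W = U @ E # V" unfolding U_def V_def using id_take_nth_drop[OF kl] WkE by simp
  have PU: "PP U" unfolding PP_def
  proof
    fix j
    have "take j U = take (min j k) W" unfolding U_def by (simp add: min.commute)
    then show "ht (take j U) \<le> ht U" using hle k unfolding U_def by simp
  qed
  have QV: "QQ V" unfolding QQ_def
  proof
    fix j
    have "take (Suc k + j) W = take (Suc k) W @ take j V" unfolding V_def by (rule take_add)
    moreover have "ht (take (Suc k) W) = M - 1" using k WkE kl by (simp add: take_Suc_conv_app_nth)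
    ultimately have 1: "ht (take (Suc k + j) W) = M - 1 + ht (take j V)" by simp
    show "ht (take j V) \<le> 0"
    proof (cases "Suc k + j \<le> length W")
      case True then show ?thesis using 1 kmax[of "Suc k + j"] by simp
    next
      case False then have "take j V = V" unfolding V_def by simp
      moreover have "take (Suc k + j) W = W" using False by simp
      ultimately show ?thesis using 1 M0 htW by simp
    qed
  qed
  have "(U, V) \<in> SS n l" using PU QV cW Wd n1 unfolding SS_def by auto
  then show ?thesis using Wd by blast
qed

lemma Del_image: "n \<ge> 1 \<Longrightarrow> Del (Suc n) (n - 1) l = (\<lambda>(U,V). U @ E # V) ` SS n l"
  using Del_SS SS_E by fastforce



definition classA :: "(step \<Rightarrow> nat) \<Rightarrow> bool" where
  "classA r \<longleftrightarrow> (r E < r D \<and> r D < r N) \<or> (r D < r N \<and> r N < r E) \<or> (r N < r E \<and> r E < r D)"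
definition classB :: "(step \<Rightarrow> nat) \<Rightarrow> bool" where
  "classB r \<longleftrightarrow> (r E < r N \<and> r N < r D) \<or> (r D < r E \<and> r E < r N) \<or> (r N < r D \<and> r D < r E)"
definition sh :: "(step \<Rightarrow> nat) \<Rightarrow> nat" where "sh r = (if r E < r N then 1 else 0)"

lemma mj_rep: "mj r (replicate k D) = 0" and dsc_rep: "dsc r (replicate k D) = 0"
  by (induction k) (auto simp: mj_Cons dsc_Cons)

lemma mj_repapp: "mj r (replicate k D @ x # W) = mj r (x # W) + k * dsc r (x # W) + (if k > 0 \<and> r x < r D then k else 0)"
  by (auto simp: mj_append mj_rep dsc_rep last_replicate)
lemma dsc_repapp: "dsc r (replicate k D @ x # W) = dsc r (x # W) + (if k > 0 \<and> r x < r D then 1 else 0)"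
  by (auto simp: dsc_append dsc_rep last_replicate)

lemma wordA0: "classA r \<Longrightarrow> v \<in> {D, E} \<Longrightarrow> mj r (N # v # V) = mj r (E # v # V) + sh r"
  unfolding classA_def sh_def by (auto simp: mj_Cons dsc_Cons split: if_splits)

lemma wordA1: "classA r \<Longrightarrow> u \<in> {N, D} \<Longrightarrow> v \<in> {D, E} \<Longrightarrow>
   mj r (U @ u # N # v # V) = mj r (U @ u # E # v # V) + sh r"
  unfolding classA_def sh_def by (auto simp: mj_append mj_Cons dsc_Cons algebra_simps split: if_splits)

lemma wordB0: "classB r \<Longrightarrow> v \<in> {D, E} \<Longrightarrow> mj r (D # N # v # V) = mj r (E # D # v # V) + sh r"
  unfolding classB_def sh_def by (auto simp: mj_Cons dsc_Cons split: if_splits)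

lemma wordB1: "classB r \<Longrightarrow> u \<in> {N, D} \<Longrightarrow> v \<in> {D, E} \<Longrightarrow>
   mj r (U @ u # D # N # v # V) = mj r (U @ u # E # D # v # V) + sh r"
  unfolding classB_def sh_def by (auto simp: mj_append mj_Cons dsc_Cons algebra_simps split: if_splits)

lemma wordB2: "classB r \<Longrightarrow> mj r (N # replicate k D @ E # R) = mj r (replicate k D @ E # E # R) + sh r"
  unfolding classB_def sh_def
  by (cases "k = 0") (auto simp: mj_Cons dsc_Cons mj_repapp dsc_repapp algebra_simps split: if_splits)

lemma wordB3: "classB r \<Longrightarrow> mj r (U @ N # N # replicate k D @ E # R) = mj r (U @ N # replicate k D @ E # E # R) + sh r"
  unfolding classB_def sh_def
  by (cases "k = 0") (auto simp: mj_append mj_Cons dsc_Cons mj_repapp dsc_repapp dsc_append dsc_rep algebra_simps split: if_splits)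



lemma split_aux: "U @ x # V = U' @ x # V' \<Longrightarrow> length U < length U' \<Longrightarrow> \<exists>V0. U' = U @ x # V0 \<and> V = V0 @ x # V'"
proof -
  assume eq: "U @ x # V = U' @ x # V'" and lt: "length U < length U'"
  from eq obtain us where "(U = U' @ us \<and> us @ x # V = x # V') \<or> (U @ us = U' \<and> x # V = us @ x # V')"
    unfolding append_eq_append_conv2 by blast
  then show ?thesis
  proof
    assume "U = U' @ us \<and> us @ x # V = x # V'" then show ?thesis using lt by simp
  next
    assume h: "U @ us = U' \<and> x # V = us @ x # V'"
    then have "us \<noteq> []" using lt by auto
    then obtain y V0 where "us = y # V0" by (cases us) auto
    then show ?thesis using h by auto
  qed
qed

lemma injN_aux: "PP U' \<Longrightarrow> QQ V \<Longrightarrow> U @ N # V = U' @ N # V' \<Longrightarrow> length U < length U' \<Longrightarrow> False"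
proof -
  assume P: "PP U'" and Q: "QQ V" and eq: "U @ N # V = U' @ N # V'" and lt: "length U < length U'"
  obtain V0 where U': "U' = U @ N # V0" and V: "V = V0 @ N # V'" using split_aux[OF eq lt] by blast
  have "ht (take (Suc (length U)) U') \<le> ht U'" using P unfolding PP_def by blast
  then have "ht V0 \<ge> 0" using U' by simp
  moreover have "ht (take (Suc (length V0)) V) \<le> 0" using Q unfolding QQ_def by blast
  then have "ht V0 + 1 \<le> 0" using V by simp
  ultimately show False by simp
qed

lemma injE_aux: "PP U' \<Longrightarrow> QQ V \<Longrightarrow> U @ E # V = U' @ E # V' \<Longrightarrow> length U < length U' \<Longrightarrow> False"
proof -
  assume P: "PP U'" and Q: "QQ V" and eq: "U @ E # V = U' @ E # V'" and lt: "length U < length U'"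
  obtain V0 where U': "U' = U @ E # V0" and V: "V = V0 @ E # V'" using split_aux[OF eq lt] by blast
  have "ht (take (length U) U') \<le> ht U'" using P unfolding PP_def by blast
  then have "ht V0 \<ge> 1" using U' by simp
  moreover have "ht (take (length V0) V) \<le> 0" using Q unfolding QQ_def by blast
  then have "ht V0 \<le> 0" using V by simp
  ultimately show False by simp
qed

lemma inj_gen:
  assumes aux: "\<And>U V U' V'. PP U' \<Longrightarrow> QQ V \<Longrightarrow> U @ x # V = U' @ x # V' \<Longrightarrow> length U < length U' \<Longrightarrow> False"
  shows "inj_on (\<lambda>(U,V). U @ x # V) (SS n l)"
proof (rule inj_onI, clarify)
  fix U V U' V' assume a: "(U,V) \<in> SS n l" "(U',V') \<in> SS n l" and eq: "U @ x # V = U' @ x # V'"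
  have "PP U" "QQ V" "PP U'" "QQ V'" using a by (auto simp: SS_def)
  then have "\<not> length U < length U'" "\<not> length U' < length U" using aux eq by metis+
  then have "length U = length U'" by simp
  then show "U = U' \<and> V = V'" using eq by simp
qed

lemma injN: "inj_on (\<lambda>(U,V). U @ N # V) (SS n l)" by (rule inj_gen) (rule injN_aux)
lemma injE: "inj_on (\<lambda>(U,V). U @ E # V) (SS n l)" by (rule inj_gen) (rule injE_aux)

lemma PP_lastE: "PP U \<Longrightarrow> U \<noteq> [] \<Longrightarrow> last U \<noteq> E"
proof
  assume P: "PP U" and ne: "U \<noteq> []" and l: "last U = E"
  then obtain U1 where U: "U = U1 @ [E]" by (metis append_butlast_last_id)
  have "ht (take (length U1) U) \<le> ht U" using P unfolding PP_def by blast
  then show False using U by simp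
qed

lemma QQ_hdN: "QQ V \<Longrightarrow> V \<noteq> [] \<Longrightarrow> hd V \<noteq> N"
proof
  assume Q: "QQ V" and ne: "V \<noteq> []" and h: "hd V = N"
  then obtain V1 where V: "V = N # V1" by (cases V) auto
  have "ht (take 1 V) \<le> 0" using Q unfolding QQ_def by blast
  then show False using V by simp
qed

lemma SS_htV: "(U,V) \<in> SS n l \<Longrightarrow> ht V < 0"
proof -
  assume a: "(U,V) \<in> SS n l"
  then have "PP U" "xcoord U + xcoord V = n" "ycoord U + ycoord V + 1 = n" by (auto simp: SS_def)
  then show ?thesis using PP_ge0[of U] by (simp add: ht_coord)
qed

lemma ht_neg_ne: "ht V < 0 \<Longrightarrow> V \<noteq> []" by auto

definition beta :: "step list \<times> step list \<Rightarrow> step list \<times> step list" where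
  "beta p = (case p of (U,V) \<Rightarrow> if U \<noteq> [] \<and> last U = D then (butlast U, D # V)
      else (U @ takeWhile (\<lambda>s. s = D) V, dropWhile (\<lambda>s. s = D) V))"
definition gamma :: "step list \<times> step list \<Rightarrow> step list \<times> step list" where
  "gamma p = (case p of (X,Y) \<Rightarrow> if Y \<noteq> [] \<and> hd Y = D then (X @ [D], tl Y)
      else (rev (dropWhile (\<lambda>s. s = D) (rev X)), rev (takeWhile (\<lambda>s. s = D) (rev X)) @ Y))"

lemma beta1: "U \<noteq> [] \<and> last U = D \<Longrightarrow> beta (U,V) = (butlast U, D # V)"
  unfolding beta_def prod.case by (rule if_P)
lemma beta2: "\<not> (U \<noteq> [] \<and> last U = D) \<Longrightarrow> beta (U,V) = (U @ takeWhile (\<lambda>s. s = D) V, dropWhile (\<lambda>s. s = D) V)"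
  unfolding beta_def prod.case by (rule if_not_P)
lemma gamma1: "Y \<noteq> [] \<and> hd Y = D \<Longrightarrow> gamma (X,Y) = (X @ [D], tl Y)"
  unfolding gamma_def prod.case by (rule if_P)
lemma gamma2: "\<not> (Y \<noteq> [] \<and> hd Y = D) \<Longrightarrow> gamma (X,Y) = (rev (dropWhile (\<lambda>s. s = D) (rev X)), rev (takeWhile (\<lambda>s. s = D) (rev X)) @ Y)"
  unfolding gamma_def prod.case by (rule if_not_P)

lemma revU_aux: "U = [] \<or> last U \<noteq> D \<Longrightarrow> dropWhile (\<lambda>s. s = D) (rev U) = rev U \<and> takeWhile (\<lambda>s. s = D) (rev U) = []"
  by (cases U rule: rev_cases) auto

lemma Y_aux: "Y = [] \<or> hd Y \<noteq> D \<Longrightarrow> dropWhile (\<lambda>s. s = D) Y = Y \<and> takeWhile (\<lambda>s. s = D) Y = []"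
  by (cases Y) auto

lemma gamma_beta: "gamma (beta p) = p"
proof (cases p)
  case (Pair U V)
  show ?thesis
  proof (cases "U \<noteq> [] \<and> last U = D")
    case True
    then have "butlast U @ [D] = U" by (metis append_butlast_last_id)
    then show ?thesis using True unfolding Pair beta_def gamma_def by simp
  next
    case False
    let ?T = "takeWhile (\<lambda>s. s = D) V" and ?R = "dropWhile (\<lambda>s. s = D) V"
    have allT: "\<forall>s\<in>set (rev ?T). s = D" by (auto dest: set_takeWhileD)
    have nR: "\<not> (?R \<noteq> [] \<and> hd ?R = D)" using hd_dropWhile[of "\<lambda>s. s = D" V] by auto
    have r: "dropWhile (\<lambda>s. s = D) (rev U) = rev U \<and> takeWhile (\<lambda>s. s = D) (rev U) = []"
      using False revU_aux by blast
    have "dropWhile (\<lambda>s. s = D) (rev ?T @ rev U) = dropWhile (\<lambda>s. s = D) (rev U)"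
      by (rule dropWhile_append2) (use allT in blast)
    then have d: "dropWhile (\<lambda>s. s = D) (rev ?T @ rev U) = rev U" using r by simp
    have "takeWhile (\<lambda>s. s = D) (rev ?T @ rev U) = rev ?T @ takeWhile (\<lambda>s. s = D) (rev U)"
      by (rule takeWhile_append2) (use allT in blast)
    then have t: "takeWhile (\<lambda>s. s = D) (rev ?T @ rev U) = rev ?T" using r by simp
    have "gamma (beta p) = gamma (U @ ?T, ?R)" unfolding Pair using beta2[OF False] by simp
    also have "\<dots> = (rev (dropWhile (\<lambda>s. s = D) (rev ?T @ rev U)), rev (takeWhile (\<lambda>s. s = D) (rev ?T @ rev U)) @ ?R)"
      using gamma2[OF nR] by simp
    also have "\<dots> = (U, V)" unfolding d t by simp
    finally show ?thesis using Pair by simp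
  qed
qed

lemma beta_gamma: "beta (gamma p) = p"
proof (cases p)
  case (Pair X Y)
  show ?thesis
  proof (cases "Y \<noteq> [] \<and> hd Y = D")
    case True then show ?thesis unfolding Pair beta_def gamma_def by (cases Y) auto
  next
    case False
    let ?T = "rev (takeWhile (\<lambda>s. s = D) (rev X))" and ?X1 = "rev (dropWhile (\<lambda>s. s = D) (rev X))"
    have allT: "\<forall>s\<in>set ?T. s = D" by (auto dest: set_takeWhileD)
    have X: "X = ?X1 @ ?T" by (metis rev_append rev_rev_ident takeWhile_dropWhile_id)
    have nX1: "\<not> (?X1 \<noteq> [] \<and> last ?X1 = D)"
      using hd_dropWhile[of "\<lambda>s. s = D" "rev X"] by (auto simp: last_rev)
    have y: "dropWhile (\<lambda>s. s = D) Y = Y \<and> takeWhile (\<lambda>s. s = D) Y = []" using False Y_aux by blast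
    have "dropWhile (\<lambda>s. s = D) (?T @ Y) = dropWhile (\<lambda>s. s = D) Y"
      by (rule dropWhile_append2) (use allT in blast)
    then have d: "dropWhile (\<lambda>s. s = D) (?T @ Y) = Y" using y by simp
    have "takeWhile (\<lambda>s. s = D) (?T @ Y) = ?T @ takeWhile (\<lambda>s. s = D) Y"
      by (rule takeWhile_append2) (use allT in blast)
    then have t: "takeWhile (\<lambda>s. s = D) (?T @ Y) = ?T" using y by simp
    have "beta (gamma p) = beta (?X1, ?T @ Y)" unfolding Pair using gamma2[OF False] by simp
    also have "\<dots> = (?X1 @ takeWhile (\<lambda>s. s = D) (?T @ Y), dropWhile (\<lambda>s. s = D) (?T @ Y))"
      by (rule beta2[OF nX1])
    also have "\<dots> = (X, Y)" unfolding d t using X by simp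
    finally show ?thesis using Pair by simp
  qed
qed



lemma SS_mem: "(U,V) \<in> SS n l \<longleftrightarrow> PP U \<and> QQ V \<and> length U + length V + 1 = l \<and>
                    xcoord U + xcoord V = n \<and> ycoord U + ycoord V + 1 = n"
  by (simp add: SS_def)

lemma beta_SS: assumes p: "p \<in> SS n l" shows "beta p \<in> SS n l"
proof (cases p)
  case (Pair U V)
  note pU = p[unfolded Pair SS_mem]
  show ?thesis
  proof (cases "U \<noteq> [] \<and> last U = D")
    case True
    then obtain U1 where U: "U = U1 @ [D]" by (metis append_butlast_last_id)
    have b: "beta p = (U1, D # V)" unfolding Pair using beta1[OF True] U by simp
    have "PP U1" using pU PP_appD[of "[D]" U1] U by simp
    moreover have "QQ (D # V)" using pU QQ_Dapp[of "[D]" V] by simp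
    ultimately show ?thesis unfolding b SS_mem using pU U by simp
  next
    case False
    define T where "T = takeWhile (\<lambda>s. s = D) V"
    define R where "R = dropWhile (\<lambda>s. s = D) V"
    have allT: "\<forall>s\<in>set T. s = D" unfolding T_def by (auto dest: set_takeWhileD)
    have V: "V = T @ R" unfolding T_def R_def by simp
    have b: "beta p = (U @ T, R)" unfolding Pair T_def R_def using beta2[OF False] by simp
    have "PP (U @ T)" using pU PP_appD[OF allT, of U] by simp
    moreover have "QQ R" using pU QQ_Dapp[OF allT, of R] V by simp
    moreover have "length U + length V + 1 = length (U @ T) + length R + 1"
      "xcoord U + xcoord V = xcoord (U @ T) + xcoord R"
      "ycoord U + ycoord V = ycoord (U @ T) + ycoord R"
      using V by simp_all
    ultimately show ?thesis unfolding b SS_mem using pU by simp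
  qed
qed

lemma gamma_SS: assumes p: "p \<in> SS n l" shows "gamma p \<in> SS n l"
proof (cases p)
  case (Pair X Y)
  note pU = p[unfolded Pair SS_mem]
  show ?thesis
  proof (cases "Y \<noteq> [] \<and> hd Y = D")
    case True
    then obtain Y1 where Y: "Y = D # Y1" by (cases Y) auto
    have b: "gamma p = (X @ [D], Y1)" unfolding Pair using gamma1[OF True] Y by simp
    have "PP (X @ [D])" using pU PP_appD[of "[D]" X] by simp
    moreover have "QQ Y1" using pU QQ_Dapp[of "[D]" Y1] Y by simp
    ultimately show ?thesis unfolding b SS_mem using pU Y by simp
  next
    case False
    define T where "T = rev (takeWhile (\<lambda>s. s = D) (rev X))"
    define X1 where "X1 = rev (dropWhile (\<lambda>s. s = D) (rev X))"
    have allT: "\<forall>s\<in>set T. s = D" unfolding T_def by (auto dest: set_takeWhileD)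
    have X: "X = X1 @ T" unfolding T_def X1_def by (metis rev_append rev_rev_ident takeWhile_dropWhile_id)
    have b: "gamma p = (X1, T @ Y)" unfolding Pair T_def X1_def using gamma2[OF False] by simp
    have "PP X1" using pU PP_appD[OF allT, of X1] X by simp
    moreover have "QQ (T @ Y)" using pU QQ_Dapp[OF allT, of Y] by simp
    moreover have "length X + length Y + 1 = length X1 + length (T @ Y) + 1"
      "xcoord X + xcoord Y = xcoord X1 + xcoord (T @ Y)"
      "ycoord X + ycoord Y = ycoord X1 + ycoord (T @ Y)"
      using X by simp_all
    ultimately show ?thesis unfolding b SS_mem using pU by simp
  qed
qed

lemma beta_bij: "bij_betw beta (SS n l) (SS n l)"
  by (rule bij_betw_byWitness[where f'=gamma]) (auto simp: gamma_beta beta_gamma beta_SS gamma_SS)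

lemma termA: assumes p: "(U,V) \<in> SS n l" and A: "classA r"
  shows "mj r (U @ N # V) = mj r (U @ E # V) + sh r"
proof -
  have P: "PP U" and Q: "QQ V" using p by (auto simp: SS_mem)
  have ne: "V \<noteq> []" using SS_htV[OF p] by auto
  then obtain v V' where V: "V = v # V'" by (cases V) auto
  have v: "v \<in> {D, E}" using QQ_hdN[OF Q ne] V by (cases v) auto
  show ?thesis
  proof (cases "U = []")
    case True then show ?thesis using wordA0[OF A v] V by simp
  next
    case False
    then obtain U1 u where U: "U = U1 @ [u]" by (metis append_butlast_last_id)
    have u: "u \<in> {N, D}" using PP_lastE[OF P False] U by (cases u) auto
    show ?thesis using wordA1[OF A u v, of U1 V'] U V by simp
  qed
qed

lemma termB: assumes p: "(U,V) \<in> SS n l" and B: "classB r"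
  shows "mj r (U @ N # V) = mj r (fst (beta (U,V)) @ E # snd (beta (U,V))) + sh r"
proof -
  have P: "PP U" and Q: "QQ V" using p by (auto simp: SS_mem)
  have htV: "ht V < 0" using SS_htV[OF p] .
  show ?thesis
  proof (cases "U \<noteq> [] \<and> last U = D")
    case True
    then obtain U1 where U: "U = U1 @ [D]" by (metis append_butlast_last_id)
    have b: "beta (U,V) = (U1, D # V)" using beta1[OF True] U by simp
    have P1: "PP U1" using P PP_appD[of "[D]" U1] U by simp
    have ne: "V \<noteq> []" using htV by auto
    then obtain v V' where V: "V = v # V'" by (cases V) auto
    have v: "v \<in> {D, E}" using QQ_hdN[OF Q ne] V by (cases v) auto
    show ?thesis
    proof (cases "U1 = []")
      case True then show ?thesis using wordB0[OF B v] V U b by simp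
    next
      case False
      then obtain U2 u where U1: "U1 = U2 @ [u]" by (metis append_butlast_last_id)
      have u: "u \<in> {N, D}" using PP_lastE[OF P1 False] U1 by (cases u) auto
      show ?thesis using wordB1[OF B u v, of U2 V'] U U1 V b by simp
    qed
  next
    case False
    define T where "T = takeWhile (\<lambda>s. s = D) V"
    define R where "R = dropWhile (\<lambda>s. s = D) V"
    have allT: "\<forall>s\<in>set T. s = D" unfolding T_def by (auto dest: set_takeWhileD)
    define k where "k = length T"
    have T: "T = replicate k D" unfolding k_def using allT by (simp add: replicate_length_same)
    have V: "V = T @ R" unfolding T_def R_def by simp
    have b: "beta (U,V) = (U @ T, R)" unfolding T_def R_def using beta2[OF False] by simp
    have QR: "QQ R" using Q QQ_Dapp[OF allT, of R] V by simp
    have "ht V = ht R" using allD_ht[OF allT] V by simp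
    then have "ht R < 0" using htV by simp
    then have neR: "R \<noteq> []" by (rule ht_neg_ne)
    have "hd R \<noteq> D" using hd_dropWhile[OF neR[unfolded R_def]] unfolding R_def by simp
    moreover have "hd R \<noteq> N" using QQ_hdN[OF QR neR] .
    ultimately have "hd R = E" by (cases "hd R") auto
    then obtain R' where R: "R = E # R'" using neR by (cases R) auto
    have V2: "V = replicate k D @ E # R'" using V by (simp only: T R)
    have b2: "beta (U,V) = (U @ replicate k D, E # R')" using b by (simp only: T R)
    show ?thesis
    proof (cases "U = []")
      case True then show ?thesis using wordB2[OF B, of k R'] V2 b2 by simp
    next
      case Une: False
      then obtain U1 u where U: "U = U1 @ [u]" by (metis append_butlast_last_id)
      have "u \<noteq> E" using PP_lastE[OF P Une] U by simp
      moreover have "u \<noteq> D" using False U by simp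
      ultimately have "u = N" by (cases u) auto
      then show ?thesis using wordB3[OF B, of U1 k R'] V2 b2 U by simp
    qed
  qed
qed



lemma sum_BDel: "(\<Sum>W\<in>BDel n l. (q::'a::comm_ring_1) ^ maj r W) = (\<Sum>p\<in>SS n l. q ^ mj r (fst p @ N # snd p))"
proof -
  have "(\<Sum>W\<in>BDel n l. q ^ maj r W) = (\<Sum>W\<in>(\<lambda>(U,V). U @ N # V) ` SS n l. q ^ mj r W)"
    by (simp add: BDel_image maj_mj)
  also have "\<dots> = (\<Sum>p\<in>SS n l. q ^ mj r ((\<lambda>(U,V). U @ N # V) p))"
    by (simp add: sum.reindex[OF injN])
  finally show ?thesis by (simp add: split_def)
qed

lemma sum_Del: "n \<ge> 1 \<Longrightarrow> (\<Sum>W\<in>Del (Suc n) (n - 1) l. (q::'a::comm_ring_1) ^ maj r W) = (\<Sum>p\<in>SS n l. q ^ mj r (fst p @ E # snd p))"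
proof -
  assume n: "n \<ge> 1"
  have "(\<Sum>W\<in>Del (Suc n) (n - 1) l. q ^ maj r W) = (\<Sum>W\<in>(\<lambda>(U,V). U @ E # V) ` SS n l. q ^ mj r W)"
    unfolding maj_mj Del_image[OF n] by (rule refl)
  also have "\<dots> = (\<Sum>p\<in>SS n l. q ^ mj r ((\<lambda>(U,V). U @ E # V) p))"
    by (simp add: sum.reindex[OF injE])
  finally show ?thesis by (simp add: split_def)
qed

lemma main_eq:
  fixes q :: "'a::comm_ring_1"
  assumes n: "n \<ge> 1" and AB: "classA r \<or> classB r"
  shows "(\<Sum>W\<in>BDel n l. q ^ maj r W) = q ^ sh r * (\<Sum>W\<in>Del (Suc n) (n - 1) l. q ^ maj r W)"
  using AB
proof
  assume A: "classA r"
  have "(\<Sum>W\<in>BDel n l. q ^ maj r W) = (\<Sum>p\<in>SS n l. q ^ sh r * q ^ mj r (fst p @ E # snd p))"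
    unfolding sum_BDel
  proof (rule sum.cong[OF refl])
    fix p assume "p \<in> SS n l"
    then show "q ^ mj r (fst p @ N # snd p) = q ^ sh r * q ^ mj r (fst p @ E # snd p)"
      using termA[of "fst p" "snd p" n l r] A by (simp add: power_add mult.commute)
  qed
  also have "\<dots> = q ^ sh r * (\<Sum>W\<in>Del (Suc n) (n - 1) l. q ^ maj r W)"
    unfolding sum_Del[OF n] by (simp add: sum_distrib_left)
  finally show ?thesis .
next
  assume B: "classB r"
  have "(\<Sum>W\<in>BDel n l. q ^ maj r W) = (\<Sum>p\<in>SS n l. q ^ sh r * q ^ mj r (fst (beta p) @ E # snd (beta p)))"
    unfolding sum_BDel
  proof (rule sum.cong[OF refl])
    fix p assume "p \<in> SS n l"
    then show "q ^ mj r (fst p @ N # snd p) = q ^ sh r * q ^ mj r (fst (beta p) @ E # snd (beta p))"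
      using termB[of "fst p" "snd p" n l r] B by (simp add: power_add mult.commute)
  qed
  also have "\<dots> = q ^ sh r * (\<Sum>p\<in>SS n l. q ^ mj r (fst (beta p) @ E # snd (beta p)))"
    by (simp add: sum_distrib_left)
  also have "(\<Sum>p\<in>SS n l. q ^ mj r (fst (beta p) @ E # snd (beta p))) = (\<Sum>p\<in>SS n l. q ^ mj r (fst p @ E # snd p))"
    by (rule sum.reindex_bij_betw[OF beta_bij])
  also have "\<dots> = (\<Sum>W\<in>Del (Suc n) (n - 1) l. q ^ maj r W)" unfolding sum_Del[OF n] ..
  finally show ?thesis .
qed

theorem lemma2p1:
  fixes r :: "step \<Rightarrow> nat" and n l :: nat and q :: "'a :: comm_ring_1"
  assumes "inj r" and "n \<ge> 1"
  shows "(r E < r N \<longrightarrow>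
            (\<Sum>W\<in>BDel n l. q ^ maj r W) = q * (\<Sum>W\<in>Del (n+1) (n-1) l. q ^ maj r W))
       \<and> (r N < r E \<longrightarrow>
            (\<Sum>W\<in>BDel n l. q ^ maj r W) = (\<Sum>W\<in>Del (n+1) (n-1) l. q ^ maj r W))"
proof -
  have "r E \<noteq> r D" "r E \<noteq> r N" "r D \<noteq> r N" using assms(1) by (auto dest: injD)
  then have AB: "classA r \<or> classB r" unfolding classA_def classB_def by arith
  have m: "(\<Sum>W\<in>BDel n l. q ^ maj r W) = q ^ sh r * (\<Sum>W\<in>Del (Suc n) (n - 1) l. q ^ maj r W)"
    by (rule main_eq[OF assms(2) AB])
  show ?thesis using m unfolding sh_def by auto
qed


end
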